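(* Let $-1<r<1$ and $\nu=5$ (sample size $n=6$). The posterior density of the scale-invariant slope under the Cauchy prior, $$p(\tilde\beta\mid y)=\frac{p_C(\tilde\beta)J(\tilde\beta,5,r,1)}{\int_{-\infty}^\infty p_C(x)J(x,5,r,1)\,dx},\qquad p_C(x)=\frac1\pi\frac1{1+x^2},$$ equals $$p(\tilde\beta\mid y)=K(r)\,\frac{1}{1+\tilde\beta^2}\cdot\frac{|\tilde\beta|(\tilde\beta^2-r\tilde\beta+1)}{(\tilde\beta^2-2r\tilde\beta+1)^2},\qquad K(r)={}_2F_1(2,1;\tfrac32;r^2)^{-1}.$$
   Context: Functions: $p_t(t;\nu)$ Student $t$ density; $P_F(x;\nu_1,\nu_2)$ $F$ distribution function; for $\nu>1$, $-1<r<1$, $\tilde\beta>0$: $t_-(\nu,r)=-\sqrt{\nu}\,r/\sqrt{1-r^2}$, $t_+(\tilde\beta,\nu,r)=\sqrt{\nu}(\tilde\beta-r)/\sqrt{1-r^2}$, $F(t,\tilde\beta,\nu,r)=\frac{\nu-1}{\nu+1}\frac{\nu+t^2}{[t_+-t_-]^2-[t-t_-]^2}$, $I(\tilde\beta,\nu,r)=\int_{t_-}^{t_+}p_t(t;\nu)P_F(F(t,\tilde\beta,\nu,r);\nu+1,\nu-1)\,dt$, and for $\beta\ne0$, $l>0$: $J(\beta,\nu,r,l)=I(|\beta|/l,\nu,r\,\mathrm{sign}\beta)+I(l/|\beta|,\nu,r\,\mathrm{sign}\beta)$. ${}_2F_1$ is the Gauss hypergeometric function. *)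

theory Defs
  imports "HOL-Analysis.Analysis"
begin

definition student_t_density :: "real \<Rightarrow> real \<Rightarrow> real" where
  "student_t_density t \<nu> =
     Gamma ((\<nu> + 1) / 2) / (sqrt (\<nu> * pi) * Gamma (\<nu> / 2)) * (1 + t\<^sup>2 / \<nu>) powr (-(\<nu> + 1) / 2)"

definition F_density :: "real \<Rightarrow> real \<Rightarrow> real \<Rightarrow> real" where
  "F_density x d1 d2 =
     (if x \<le> 0 then 0 else
        Gamma ((d1 + d2) / 2) / (Gamma (d1 / 2) * Gamma (d2 / 2)) * (d1 / d2) powr (d1 / 2)
        * x powr (d1 / 2 - 1) * (1 + d1 * x / d2) powr (-(d1 + d2) / 2))"

definition F_cdf :: "real \<Rightarrow> real \<Rightarrow> real \<Rightarrow> real" where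
  "F_cdf x d1 d2 = (LINT u:{..x}|lborel. F_density u d1 d2)"

definition t_minus :: "real \<Rightarrow> real \<Rightarrow> real" where
  "t_minus \<nu> r = - sqrt \<nu> * r / sqrt (1 - r\<^sup>2)"

definition t_plus :: "real \<Rightarrow> real \<Rightarrow> real \<Rightarrow> real" where
  "t_plus \<beta> \<nu> r = sqrt \<nu> * (\<beta> - r) / sqrt (1 - r\<^sup>2)"

definition F_fun :: "real \<Rightarrow> real \<Rightarrow> real \<Rightarrow> real \<Rightarrow> real" where
  "F_fun t \<beta> \<nu> r = (\<nu> - 1) / (\<nu> + 1) * (\<nu> + t\<^sup>2) /
      ((t_plus \<beta> \<nu> r - t_minus \<nu> r)\<^sup>2 - (t - t_minus \<nu> r)\<^sup>2)"

definition I_fun :: "real \<Rightarrow> real \<Rightarrow> real \<Rightarrow> real" where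
  "I_fun \<beta> \<nu> r = (LINT t:{t_minus \<nu> r..t_plus \<beta> \<nu> r}|lborel.
      student_t_density t \<nu> * F_cdf (F_fun t \<beta> \<nu> r) (\<nu> + 1) (\<nu> - 1))"

text \<open>J, defined for beta \<noteq> 0 and l > 0 (its value at beta = 0 is irrelevant: a null set).\<close>
definition J_fun :: "real \<Rightarrow> real \<Rightarrow> real \<Rightarrow> real \<Rightarrow> real" where
  "J_fun \<beta> \<nu> r l = I_fun (\<bar>\<beta>\<bar> / l) \<nu> (r * sgn \<beta>) + I_fun (l / \<bar>\<beta>\<bar>) \<nu> (r * sgn \<beta>)"

definition cauchy_density :: "real \<Rightarrow> real" where
  "cauchy_density x = 1 / pi * (1 / (1 + x\<^sup>2))"

definition hyp2F1 :: "real \<Rightarrow> real \<Rightarrow> real \<Rightarrow> real \<Rightarrow> real" where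
  "hyp2F1 a b c z = (\<Sum>n. pochhammer a n * pochhammer b n / (pochhammer c n * fact n) * z ^ n)"

end

theory Submission
  imports Defs "HOL-Real_Asymp.Real_Asymp"
begin



lemma FTC_defect:
  fixes f h G :: "real \<Rightarrow> real"
  assumes ab: "a \<le> b" and fh: "\<And>x. a \<le> x \<Longrightarrow> x < b \<Longrightarrow> f x = h x"
    and G: "\<And>x. a \<le> x \<Longrightarrow> x \<le> b \<Longrightarrow> (G has_real_derivative h x) (at x)"
    and h: "continuous_on {a..b} h"
  shows "(LINT x:{a..b}|lborel. f x) = G b - G a"
proof -
  have eq: "(\<lambda>x. indicator {a..b} x *\<^sub>R f x) = (\<lambda>x. indicator {a..b} x *\<^sub>R h x + indicator {b} x * (f b - h b))"
  proof
    fix x show "indicator {a..b} x *\<^sub>R f x = indicator {a..b} x *\<^sub>R h x + indicator {b} x * (f b - h b)"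
    proof (cases "x = b")
      case True thus ?thesis using ab by (simp add: indicator_def)
    next
      case False
      hence "indicator {b} x = (0::real)" by (simp add: indicator_def)
      moreover have "indicator {a..b} x *\<^sub>R f x = indicator {a..b} x *\<^sub>R h x"
        using fh[of x] False by (cases "a \<le> x \<and> x \<le> b") (auto simp: indicator_def)
      ultimately show ?thesis by simp
    qed
  qed
  have i1: "integrable lborel (\<lambda>x. indicator {a..b} x *\<^sub>R h x)"
    using borel_integrable_atLeastAtMost'[OF h] unfolding set_integrable_def .
  have i2: "integrable lborel (\<lambda>x. indicator {b} x * (f b - h b))"
    by (intro integrable_mult_left) auto
  have "integral\<^sup>L lborel (\<lambda>x. indicator {a..b} x *\<^sub>R h x) = G b - G a"
  proof (rule integral_FTC_atLeastAtMost[OF ab])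
    fix x assume "a \<le> x" "x \<le> b"
    show "(G has_vector_derivative h x) (at x within {a..b})"
      unfolding has_real_derivative_iff_has_vector_derivative[symmetric]
      by (rule has_field_derivative_at_within[OF G[OF \<open>a \<le> x\<close> \<open>x \<le> b\<close>]])
  qed (rule h)
  moreover have "integral\<^sup>L lborel (\<lambda>x. indicator {b} x * (f b - h b)) = 0"
    by (simp only: integral_mult_left_zero integral_indicator) simp
  ultimately show ?thesis unfolding set_lebesgue_integral_def eq
    using Bochner_Integration.integral_add[OF i1 i2] by simp
qed

definition Fz :: "real \<Rightarrow> real" where "Fz u = 27*u^3*(8+3*u)/(2+3*u)^4"

lemma F_density_64: "u > 0 \<Longrightarrow> F_density u 6 4 = 1296 * u^2 / (2 + 3*u)^5"
proof -
  assume u: "u > 0"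
  have g: "Gamma ((6+4)/2) = (24::real)" "Gamma (6/2) = (2::real)" "Gamma (4/2) = (1::real)"
    by (simp_all add: Gamma_numeral fact_numeral)
  have p1: "((6::real)/4) powr (6/2) = 27/8" by (simp add: power_divide)
  have p2: "u powr (6/2-1) = u^2" using u by (simp add: powr_numeral)
  have p3: "(1 + 6*u/4) powr (-(6+4)/2) = 32/(2+3*u)^5"
    using u by (simp add: powr_minus powr_numeral divide_simps)
  show ?thesis using u unfolding F_density_def
    by (simp only: g p1 p2 p3 if_False not_le) simp
qed

lemma Fz_deriv: "u > -2/3 \<Longrightarrow> (Fz has_real_derivative 1296 * u^2 / (2 + 3*u)^5) (at u)"
proof -
  assume u: "u > -2/3"
  hence nz: "2+3*u \<noteq> 0" "2+3*u > 0" by linarith+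
  show ?thesis unfolding Fz_def
    apply (rule derivative_eq_intros refl)+
    using nz apply (simp)
    using nz by (simp add: field_simps) algebra
qed

lemma F_cdf_64: assumes x: "x > 0" shows "F_cdf x 6 4 = Fz x"
proof -
  define f where "f u = 1296 * u^2 / (2 + 3*u)^5" for u :: real
  have eq: "(\<lambda>u. indicator {..x} u *\<^sub>R F_density u 6 4) = (\<lambda>u. indicator {0..x} u *\<^sub>R f u)"
  proof
    fix u :: real
    show "indicator {..x} u *\<^sub>R F_density u 6 4 = indicator {0..x} u *\<^sub>R f u"
    proof (cases "u > 0")
      case True thus ?thesis by (simp add: F_density_64 f_def indicator_def)
    next
      case False thus ?thesis by (auto simp: f_def F_density_def indicator_def)
    qed
  qed
  have "integral\<^sup>L lborel (\<lambda>u. indicator {0..x} u *\<^sub>R f u) = Fz x - Fz 0"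
  proof (rule integral_FTC_atLeastAtMost)
    show "0 \<le> x" using x by simp
    fix u assume u: "0 \<le> u" "u \<le> x"
    have "(Fz has_real_derivative f u) (at u)" unfolding f_def by (rule Fz_deriv) (use u in simp)
    thus "(Fz has_vector_derivative f u) (at u within {0..x})"
      unfolding has_real_derivative_iff_has_vector_derivative[symmetric]
      by (rule has_field_derivative_at_within)
  next
    show "continuous_on {0..x} f" unfolding f_def
      by (intro continuous_intros) (auto simp: add_nonneg_eq_0_iff)
  qed
  moreover have "Fz 0 = 0" by (simp add: Fz_def)
  ultimately show ?thesis unfolding F_cdf_def set_lebesgue_integral_def eq by simp
qed



lemma Fz_alg: assumes "E > 0" "D > 0"
  shows "Fz (2/3*E/D) / E^3 = (4*(D+E) - 3*E)/(D+E)^4"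
  using assms unfolding Fz_def by (simp add: field_simps) algebra

definition c5 :: real where "c5 = Gamma 3 / (sqrt (5*pi) * Gamma (5/2))"

lemma c5_pos: "c5 > 0" unfolding c5_def by (intro divide_pos_pos mult_pos_pos) auto

lemma student5: "student_t_density t 5 = c5 * (1 + t^2/5) powr (-3)"
  unfolding student_t_density_def c5_def by simp

lemma pt_core:
  assumes r: "-1 < r" "r < 1" and w: "0 \<le> w" "w < b"
    and Fcdf: "\<And>x. x > 0 \<Longrightarrow> F_cdf x 6 4 = Fz x"
  defines "s \<equiv> sqrt (1 - r^2)" and "k \<equiv> sqrt 5 / sqrt (1 - r^2)"
  shows "student_t_density (k*(w-r)) 5 * F_cdf (F_fun (k*(w-r)) b 5 r) 6 4
         = c5 * s^6 * (1 + 4*b^2 - 2*r*w - 3*w^2) / (1 + b^2 - 2*r*w)^4"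
proof -
  have r2: "r^2 < 1" using r by (simp add: abs_less_iff power2_less_1_iff)
  hence s2: "s^2 = 1 - r^2" and s0: "s > 0" unfolding s_def by auto
  have k: "k = sqrt 5 / s" unfolding k_def s_def ..
  have k2: "k^2 * s^2 = 5" using s0 unfolding k by (simp add: power_divide)
  have k0: "k > 0" using s0 unfolding k by simp
  define E where "E = 1 + w^2 - 2*r*w"
  have E_alt: "E = (w - r)^2 + s^2" unfolding E_def s2 by (simp add: power2_eq_square algebra_simps)
  have E0: "E > 0" unfolding E_alt using s0 by (simp add: add_nonneg_pos)
  define D where "D = b^2 - w^2"
  have D0: "D > 0" unfolding D_def using w by (simp add: power_strict_mono)
  have tm: "t_minus 5 r = - (k*r)" unfolding t_minus_def k_def by simp
  have tp: "t_plus b 5 r = k*(b-r)" unfolding t_plus_def k_def by simp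
  have num: "5 + (k*(w-r))^2 = k^2 * E"
    unfolding E_alt using k2 by (simp add: algebra_simps power2_eq_square)
  have den: "(k*(b-r) - - (k*r))^2 - (k*(w-r) - - (k*r))^2 = k^2 * D"
    unfolding D_def by (simp add: algebra_simps power2_eq_square)
  have FF: "F_fun (k*(w-r)) b 5 r = 2/3 * E / D"
    unfolding F_fun_def tm tp num den using k0 D0 by (simp add: field_simps)
  have FFpos: "2/3 * E / D > 0" using E0 D0 by simp
  have st: "student_t_density (k*(w-r)) 5 = c5 * s^6 / E^3"
  proof -
    have "1 + (k*(w-r))^2/5 = E / s^2"
      using num k2 s0 by (simp add: field_simps)
    moreover have "(E / s^2) powr (-3) = s^6 / E^3"
      using E0 s0 by (simp add: powr_minus field_simps power_divide flip: power_mult)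
    ultimately show ?thesis unfolding student5 by simp
  qed
  have "student_t_density (k*(w-r)) 5 * F_cdf (F_fun (k*(w-r)) b 5 r) 6 4
      = c5 * s^6 * (Fz (2/3*E/D) / E^3)"
    unfolding st FF Fcdf[OF FFpos] by simp
  also have "\<dots> = c5 * s^6 * ((4*(D+E) - 3*E)/(D+E)^4)"
    by (simp only: Fz_alg[OF E0 D0])
  also have "D + E = 1 + b^2 - 2*r*w" unfolding D_def E_def by simp
  also have "4*(1 + b^2 - 2*r*w) - 3*E = 1 + 4*b^2 - 2*r*w - 3*w^2" unfolding E_def by simp
  finally show ?thesis by simp
qed



definition Qf :: "real \<Rightarrow> real \<Rightarrow> real \<Rightarrow> real" where
  "Qf b r w = (1+b^2)^2*(1+4*b^2)*w - 3*r*(1+b^2)*(1+3*b^2)*w^2 + (2*r^2*(1+3*b^2) - (1+b^2)^2)*w^3"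

lemma Qf_deriv: fixes r b w :: real assumes N: "1 + b^2 - 2*r*w \<noteq> 0"
  shows "((\<lambda>w. Qf b r w / (1 + b^2 - 2*r*w)^3) has_real_derivative
     (1+b^2)^3 * (1 + 4*b^2 - 2*r*w - 3*w^2) / (1 + b^2 - 2*r*w)^4) (at w)"
proof -
  show ?thesis unfolding Qf_def
    apply (rule derivative_eq_intros refl)+
    using N apply (simp)
    using N by (simp add: field_simps) algebra
qed

lemma Qf_end: fixes r b :: real assumes N: "1 + b^2 - 2*r*b \<noteq> 0"
  shows "Qf b r b / ((1+b^2)^3 * (1 + b^2 - 2*r*b)^3) = b*(1+3*b^2)*(1+b^2-r*b)/((1+b^2)^3*(1+b^2-2*r*b)^2)"
proof -
  have A: "1 + b^2 \<noteq> (0::real)" using zero_le_power2[of b] by linarith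
  show ?thesis unfolding Qf_def using N A by (simp add: field_simps) algebra
qed

lemma N_pos: fixes r b w :: real assumes r: "-1 < r" "r < 1" and w: "0 \<le> w" "w \<le> b"
  shows "1 + b^2 - 2*r*w > 0"
proof (cases "b = 0")
  case True thus ?thesis using w by simp
next
  case False
  hence b: "b > 0" using w by simp
  have "r*w \<le> \<bar>r\<bar>*b" using w by (metis abs_ge_self abs_ge_zero mult_mono order_trans)
  moreover have "\<bar>r\<bar>*b < b" using b r by (simp add: abs_less_iff)
  moreover have "0 \<le> (b-1)^2" by simp
  hence "2*b \<le> 1 + b^2" by (simp add: power2_diff)
  ultimately show ?thesis by linarith
qed




lemma I5: fixes r b :: real assumes r: "-1 < r" "r < 1" and b: "b \<ge> 0"
  shows "I_fun b 5 r = c5 * sqrt 5 * (sqrt (1 - r^2))^5 *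
     (b*(1+3*b^2)*(1+b^2-r*b)/((1+b^2)^3*(1+b^2-2*r*b)^2))"
proof -
  define s where "s = sqrt (1 - r^2)"
  define k where "k = sqrt 5 / sqrt (1 - r^2)"
  have r2: "r^2 < 1" using r by (simp add: abs_less_iff power2_less_1_iff)
  hence s2: "s^2 = 1 - r^2" and s0: "s > 0" unfolding s_def by auto
  have k: "k = sqrt 5 / s" unfolding k_def s_def ..
  have k0: "k > 0" using s0 unfolding k by simp
  have ks: "k * s^6 = sqrt 5 * s^5" using s0 unfolding k by (simp add: field_simps eval_nat_numeral)
  have tm: "t_minus 5 r = - (k*r)" unfolding t_minus_def k_def by simp
  have tp: "t_plus b 5 r = k*(b-r)" unfolding t_plus_def k_def by simp
  define W where "W t = t / k + r" for t
  define N where "N w = 1 + b^2 - 2*r*w" for w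
  define h where "h t = c5 * s^6 * (1 + 4*b^2 - 2*r*W t - 3*(W t)^2) / (N (W t))^4" for t
  define G where "G t = c5 * k * s^6 / (1+b^2)^3 * (Qf b r (W t) / (N (W t))^3)" for t
  have Wk: "W (k*(w - r)) = w" for w unfolding W_def using k0 by simp
  have Npos: "0 \<le> w \<Longrightarrow> w \<le> b \<Longrightarrow> N w > 0" for w unfolding N_def by (rule N_pos[OF r])
  have Wrange: "0 \<le> W t" "W t \<le> b" if "- (k*r) \<le> t" "t \<le> k*(b-r)" for t
    using that k0 unfolding W_def by (simp_all add: field_simps)
  have "I_fun b 5 r = (LINT t:{- (k*r)..k*(b-r)}|lborel.
      student_t_density t 5 * F_cdf (F_fun t b 5 r) 6 4)"
    unfolding I_fun_def tm tp by simp
  also have "\<dots> = G (k*(b-r)) - G (- (k*r))"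
  proof (rule FTC_defect)
    show "- (k*r) \<le> k*(b-r)" using k0 b by (simp add: algebra_simps)
  next
    fix t assume t: "- (k*r) \<le> t" "t < k*(b-r)"
    define w where "w = W t"
    have tw: "t = k*(w - r)" unfolding w_def W_def using k0 by simp
    have w: "0 \<le> w" "w < b" using t k0 unfolding w_def W_def by (simp_all add: field_simps)
    show "student_t_density t 5 * F_cdf (F_fun t b 5 r) 6 4 = h t"
      unfolding h_def N_def w_def[symmetric] tw Wk
      using pt_core[OF r w F_cdf_64] unfolding s_def k_def by simp
  next
    fix t assume t: "- (k*r) \<le> t" "t \<le> k*(b-r)"
    have Np: "N (W t) > 0" using Npos Wrange[OF t] by blast
    have d1: "((\<lambda>w. Qf b r w / (N w)^3) has_real_derivative
       (1+b^2)^3 * (1 + 4*b^2 - 2*r*W t - 3*(W t)^2) / (N (W t))^4) (at (W t))"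
      unfolding N_def using Qf_deriv Np unfolding N_def by auto
    have d2: "(W has_real_derivative 1/k) (at t)" unfolding W_def
      using k0 by (auto intro!: derivative_eq_intros)
    have "((\<lambda>t. c5 * k * s^6 / (1+b^2)^3 * (Qf b r (W t) / (N (W t))^3)) has_real_derivative
       c5 * k * s^6 / (1+b^2)^3 * ((1+b^2)^3 * (1 + 4*b^2 - 2*r*W t - 3*(W t)^2) / (N (W t))^4 * (1/k))) (at t)"
      by (rule DERIV_cmult, rule DERIV_chain2[OF d1 d2])
    moreover have "c5 * k * s^6 / (1+b^2)^3 * ((1+b^2)^3 * (1 + 4*b^2 - 2*r*W t - 3*(W t)^2) / (N (W t))^4 * (1/k)) = h t"
    proof -
      have A: "(1 + b^2) \<noteq> (0::real)" using zero_le_power2[of b] by linarith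
      show ?thesis unfolding h_def using A k0 Np by (simp add: field_simps)
    qed
    ultimately show "(G has_real_derivative h t) (at t)" unfolding G_def by simp
  next
    have nz: "(1 + b^2 - 2*r*(t/k + r))^4 \<noteq> 0" if "t \<in> {- (k*r)..k*(b-r)}" for t
    proof -
      have "N (W t) > 0" using Npos Wrange that by force
      thus ?thesis unfolding N_def W_def by simp
    qed
    show "continuous_on {- (k*r)..k*(b-r)} h" unfolding h_def W_def N_def
      by (intro continuous_intros ballI nz) (use k0 in auto)
  qed
  also have "G (- (k*r)) = 0" unfolding G_def W_def Qf_def using k0 by simp
  also have "G (k*(b-r)) = c5 * k * s^6 * (Qf b r b / ((1+b^2)^3 * (N b)^3))"
    unfolding G_def W_def using k0 by simp
  also have "Qf b r b / ((1+b^2)^3 * (N b)^3) = b*(1+3*b^2)*(1+b^2-r*b)/((1+b^2)^3*(1+b^2-2*r*b)^2)"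
    unfolding N_def using Qf_end Npos[of b] b unfolding N_def by auto
  finally show ?thesis unfolding s_def[symmetric] using ks by simp
qed


definition gfun :: "real \<Rightarrow> real \<Rightarrow> real" where
  "gfun r x = \<bar>x\<bar>*(x^2-r*x+1)/(x^2-2*r*x+1)^2"

definition Phi :: "real \<Rightarrow> real \<Rightarrow> real" where
  "Phi b q = b*(1+3*b^2)*(1+b^2-q*b)/((1+b^2)^3*(1+b^2-2*q*b)^2)"

lemma Phi_sum: fixes b q :: real assumes b: "b > 0" and q: "-1 < q" "q < 1"
  shows "Phi b q + Phi (1/b) q = b*(1+b^2-q*b)/(1+b^2-2*q*b)^2"
proof -
  define N where "N = 1+b^2-2*q*b"
  have N: "N > 0" unfolding N_def using N_pos[OF q, of b b] b by simp
  have A: "1 + b^2 > 0" using zero_le_power2[of b] by linarith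
  have e1: "1 + (1/b)^2 = (1+b^2)/b^2" using b by (simp add: field_simps)
  have e2: "1 + (1/b)^2 - 2*q*(1/b) = N/b^2" unfolding N_def using b by (simp add: field_simps power2_eq_square)
  have e3: "1 + (1/b)^2 - q*(1/b) = (1+b^2-q*b)/b^2" using b by (simp add: field_simps power2_eq_square)
  have e4: "1 + 3*(1/b)^2 = (b^2+3)/b^2" using b by (simp add: field_simps)
  have "Phi (1/b) q = (1/b) * ((b^2+3)/b^2) * ((1+b^2-q*b)/b^2) / (((1+b^2)/b^2)^3 * (N/b^2)^2)"
    unfolding Phi_def unfolding e2 e3 unfolding e4 e1 ..
  also have "\<dots> = b^5*(b^2+3)*(1+b^2-q*b)/((1+b^2)^3*N^2)"
    using b A N by (simp add: field_simps) algebra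
  finally have i: "Phi (1/b) q = b^5*(b^2+3)*(1+b^2-q*b)/((1+b^2)^3*N^2)" .
  have "Phi b q + Phi (1/b) q = (b*(1+3*b^2) + b^5*(b^2+3))*(1+b^2-q*b)/((1+b^2)^3*N^2)"
  proof -
    have "Phi b q = b*(1+3*b^2)*(1+b^2-q*b)/((1+b^2)^3*N^2)" unfolding Phi_def N_def ..
    thus ?thesis unfolding i by (simp only: add_divide_distrib[symmetric] distrib_right)
  qed
  also have "b*(1+3*b^2) + b^5*(b^2+3) = b*(1+b^2)^3" by algebra
  also have "b*(1+b^2)^3*(1+b^2-q*b)/((1+b^2)^3*N^2) = b*(1+b^2-q*b)/N^2" using A by simp
  finally show ?thesis unfolding N_def .
qed

lemma J5: fixes r x :: real assumes r: "-1 < r" "r < 1"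
  shows "J_fun x 5 r 1 = c5 * sqrt 5 * (sqrt (1-r^2))^5 * gfun r x"
proof (cases "x = 0")
  case True
  have "I_fun 0 5 0 = 0" using I5[of 0 0] by simp
  thus ?thesis using True unfolding J_fun_def gfun_def by simp
next
  case False
  define q where "q = r * sgn x"
  define b where "b = \<bar>x\<bar>"
  have b: "b > 0" using False unfolding b_def by simp
  have q2: "q^2 = r^2" unfolding q_def using False by (simp add: power_mult_distrib sgn_if)
  have q: "-1 < q" "q < 1" unfolding q_def using r False by (auto simp: sgn_if)
  have qb: "q * b = r * x" unfolding q_def b_def by (simp add: sgn_mult_abs mult.assoc)
  have bx: "b^2 = x^2" unfolding b_def by simp
  have "J_fun x 5 r 1 = I_fun b 5 q + I_fun (1/b) 5 q"
    unfolding J_fun_def q_def b_def by simp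
  also have "\<dots> = c5 * sqrt 5 * (sqrt (1-q^2))^5 * (Phi b q + Phi (1/b) q)"
  proof -
    have i1: "I_fun b 5 q = c5 * sqrt 5 * (sqrt (1-q^2))^5 * Phi b q"
      unfolding Phi_def by (rule I5[OF q]) (use b in simp)
    have i2: "I_fun (1/b) 5 q = c5 * sqrt 5 * (sqrt (1-q^2))^5 * Phi (1/b) q"
      unfolding Phi_def by (rule I5[OF q]) (use b in simp)
    show ?thesis unfolding i1 i2 by (simp only: distrib_left)
  qed
  also have "\<dots> = c5 * sqrt 5 * (sqrt (1-r^2))^5 * (b*(1+b^2-q*b)/(1+b^2-2*q*b)^2)"
    unfolding Phi_sum[OF b q] q2 ..
  also have "b*(1+b^2-q*b)/(1+b^2-2*q*b)^2 = gfun r x"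
  proof -
    have h1: "1+b^2-q*b = x^2-r*x+1" using qb bx by simp
    have h2: "1+b^2-2*q*b = x^2-2*r*x+1" using qb bx by (simp add: mult.assoc)
    show ?thesis unfolding h1 h2 unfolding gfun_def b_def ..
  qed
  finally show ?thesis .
qed


definition Rf :: "real \<Rightarrow> real \<Rightarrow> real" where
  "Rf r x = \<bar>x\<bar>*(x^2-r*x+1)/((x^2-2*r*x+1)^2*(1+x^2))"

definition Gf :: "real \<Rightarrow> real \<Rightarrow> real \<Rightarrow> real" where
  "Gf r s x = 1/(4*r* s) * arctan ((x-r)/s) - 1/(4*r) * arctan x - 1/(4*(x^2-2*r*x+1))
     + r/(4* s^2) * ((x-r)/(x^2-2*r*x+1)) + r/(4* s^3) * arctan ((x-r)/s)"

lemma Q_pos: fixes r x :: real assumes "-1 < r" "r < 1" shows "x^2-2*r*x+1 > 0"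
proof -
  have "r^2 < 1" using assms by (simp add: abs_less_iff power2_less_1_iff)
  moreover have "x^2-2*r*x+1 = (x-r)^2 + (1 - r^2)" by (simp add: power2_eq_square algebra_simps)
  ultimately show ?thesis by (smt (verit) zero_le_power2)
qed

lemma Gf_deriv: fixes r s x :: real
  assumes r: "-1 < r" "r < 1" "r \<noteq> 0" and s: "s > 0" "s^2 = 1 - r^2"
  shows "(Gf r s has_real_derivative x*(x^2-r*x+1)/((x^2-2*r*x+1)^2*(1+x^2))) (at x)"
proof -
  define Q where "Q = x^2-2*r*x+1"
  have Q0: "Q > 0" unfolding Q_def using Q_pos[OF r(1,2)] .
  have Qs: "Q = s^2 + (x-r)^2" unfolding Q_def s(2) by (simp add: power2_eq_square algebra_simps)
  have P: "1 + x^2 > 0" using zero_le_power2[of x] by linarith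
  have d1: "((\<lambda>x. arctan ((x-r)/s)) has_real_derivative s/Q) (at x)"
  proof -
    have "((\<lambda>x. arctan ((x-r)/s)) has_real_derivative inverse (1 + ((x-r)/s)^2) * (1/s)) (at x)"
      using s by (auto intro!: derivative_eq_intros)
    moreover have "inverse (1 + ((x-r)/s)^2) * (1/s) = s/Q"
      unfolding Qs using s Q0 Qs by (simp add: field_simps power2_eq_square)
    ultimately show ?thesis by simp
  qed
  have d2: "(arctan has_real_derivative 1/(1+x^2)) (at x)"
    using DERIV_arctan[of x] by (simp add: divide_inverse)
  have d3: "((\<lambda>x. 1/(4*(x^2-2*r*x+1))) has_real_derivative - (4*(2*x-2*r))/(4*Q)^2) (at x)"
    using Q0 unfolding Q_def by (auto intro!: derivative_eq_intros simp: power2_eq_square algebra_simps)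
  have d4: "((\<lambda>x. (x-r)/(x^2-2*r*x+1)) has_real_derivative (Q - (x-r)*(2*x-2*r))/Q^2) (at x)"
    using Q0 unfolding Q_def by (auto intro!: derivative_eq_intros simp: power2_eq_square algebra_simps)
  have "(Gf r s has_real_derivative
      1/(4*r* s) * (s/Q) - 1/(4*r) * (1/(1+x^2)) - (- (4*(2*x-2*r))/(4*Q)^2)
       + r/(4* s^2) * ((Q - (x-r)*(2*x-2*r))/Q^2) + r/(4* s^3) * (s/Q)) (at x)"
    unfolding Gf_def by (intro DERIV_add DERIV_diff DERIV_cmult d1 d2 d3 d4)
  moreover have "1/(4*r* s) * (s/Q) - 1/(4*r) * (1/(1+x^2)) - (- (4*(2*x-2*r))/(4*Q)^2)
       + r/(4* s^2) * ((Q - (x-r)*(2*x-2*r))/Q^2) + r/(4* s^3) * (s/Q)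
     = x*(x^2-r*x+1)/((x^2-2*r*x+1)^2*(1+x^2))"
  proof -
    define P where "P = 1 + x^2"
    have nz: "Q \<noteq> 0" "P \<noteq> 0" "s \<noteq> 0" "r \<noteq> 0" using Q0 P s r unfolding P_def by auto
    have "1/(4*r* s) * (s/Q) - 1/(4*r) * (1/P) - (- (4*(2*x-2*r))/(4*Q)^2)
       + r/(4* s^2) * ((Q - (x-r)*(2*x-2*r))/Q^2) + r/(4* s^3) * (s/Q)
     = x*(x^2-r*x+1)/(Q^2*P)"
      using nz apply (simp add: field_simps)
      using Q_def P_def s(2) by algebra
    thus ?thesis unfolding P_def Q_def .
  qed
  ultimately show ?thesis by simp
qed


definition Gtop :: "real \<Rightarrow> real \<Rightarrow> real" where
  "Gtop r s = 1/(4*r* s) * (pi/2) - 1/(4*r) * (pi/2) - 0 + r/(4* s^2) * 0 + r/(4* s^3) * (pi/2)"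

lemma Gf_top: fixes r s :: real assumes s: "s > 0" shows "(Gf r s \<longlongrightarrow> Gtop r s) at_top"
proof -
  have L1: "((\<lambda>x. arctan ((x-r)/s)) \<longlongrightarrow> pi/2) at_top"
  proof (rule filterlim_compose[OF tendsto_arctan_at_top])
    show "filterlim (\<lambda>x::real. (x-r)/s) at_top at_top" using s by real_asymp
  qed
  have L3: "((\<lambda>x::real. 1/(4*(x^2-2*r*x+1))) \<longlongrightarrow> 0) at_top" by real_asymp
  have L4: "((\<lambda>x::real. (x-r)/(x^2-2*r*x+1)) \<longlongrightarrow> 0) at_top" by real_asymp
  show ?thesis unfolding Gf_def Gtop_def
    by (intro tendsto_add tendsto_diff tendsto_mult_left L1 L3 L4 tendsto_arctan_at_top)
qed

lemma Rf_nonneg: fixes r x :: real assumes r: "-1 < r" "r < 1" shows "Rf r x \<ge> 0"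
proof -
  have "x^2-r*x+1 > 0"
  proof -
    have "\<bar>r\<bar> \<le> 1" using r by simp
    hence "\<bar>r*x\<bar> \<le> \<bar>x\<bar>" by (simp add: abs_mult mult_left_le_one_le)
    hence a: "r*x \<le> \<bar>x\<bar>" by linarith
    have "0 \<le> (\<bar>x\<bar> - 1/2)^2" by simp
    hence "0 \<le> \<bar>x\<bar>^2 - \<bar>x\<bar> + 1/4" by (simp add: power2_diff power2_eq_square algebra_simps)
    moreover have "\<bar>x\<bar>^2 = x^2" by simp
    ultimately show ?thesis using a by linarith
  qed
  moreover have "1 + x^2 > 0" using zero_le_power2[of x] by linarith
  ultimately show ?thesis unfolding Rf_def using Q_pos[OF r, of x]
    by (intro divide_nonneg_pos mult_nonneg_nonneg mult_pos_pos zero_less_power) auto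
qed

lemma Rf_cont: fixes r x :: real assumes r: "-1 < r" "r < 1" shows "isCont (Rf r) x"
proof -
  have "(x^2-2*r*x+1)^2*(1+x^2) \<noteq> 0" using Q_pos[OF r, of x] zero_le_power2[of x]
    by (smt (verit) mult_pos_pos zero_less_power)
  thus ?thesis unfolding Rf_def by (intro continuous_intros)
qed

lemma int_pos: fixes r :: real assumes r: "-1 < r" "r < 1" "r \<noteq> 0"
  defines "s \<equiv> sqrt (1 - r^2)"
  shows "set_integrable lborel (einterval 0 \<infinity>) (Rf r)"
    "(LBINT x=0..\<infinity>. Rf r x) = Gtop r s - Gf r s 0"
proof -
  have r2: "r^2 < 1" using r by (simp add: abs_less_iff power2_less_1_iff)
  hence s2: "s^2 = 1 - r^2" and s0: "s > 0" unfolding s_def by auto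
  have D: "(Gf r s has_real_derivative Rf r x) (at x)" if "x > 0" for x
    using Gf_deriv[OF r s0 s2, of x] that unfolding Rf_def by simp
  have cont0: "isCont (Gf r s) 0" using Gf_deriv[OF r s0 s2, of 0] by (rule DERIV_isCont)
  have A: "((Gf r s \<circ> real_of_ereal) \<longlongrightarrow> Gf r s 0) (at_right (0::ereal))"
    unfolding zero_ereal_def ereal_tendsto_simps1
    using cont0 unfolding isCont_def by (rule tendsto_within_subset) simp
  have B: "((Gf r s \<circ> real_of_ereal) \<longlongrightarrow> Gtop r s) (at_left (\<infinity>::ereal))"
    unfolding ereal_tendsto_simps1 using Gf_top[OF s0] .
  note X = interval_integral_FTC_nonneg[where F = "Gf r s" and f = "Rf r" and a = 0 and b = \<infinity>,
     OF _ _ _ _ A B]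
  have h1: "(0::ereal) < \<infinity>" by simp
  have h2: "\<And>x. 0 < ereal x \<Longrightarrow> ereal x < \<infinity> \<Longrightarrow> (Gf r s has_real_derivative Rf r x) (at x)"
    using D by (simp add: zero_ereal_def)
  have h3: "\<And>x. 0 < ereal x \<Longrightarrow> ereal x < \<infinity> \<Longrightarrow> isCont (Rf r) x"
    using Rf_cont[OF r(1,2)] by blast
  have h4: "AE x in lborel. 0 < ereal x \<longrightarrow> ereal x < \<infinity> \<longrightarrow> 0 \<le> Rf r x"
    using Rf_nonneg[OF r(1,2)] by simp
  show "set_integrable lborel (einterval 0 \<infinity>) (Rf r)" using X(1)[OF h1 h2 h3 h4] .
  show "(LBINT x=0..\<infinity>. Rf r x) = Gtop r s - Gf r s 0" using X(2)[OF h1 h2 h3 h4] .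
qed

lemma int_neg: fixes r :: real assumes r: "-1 < r" "r < 1" "r \<noteq> 0"
  defines "s \<equiv> sqrt (1 - r^2)"
  shows "set_integrable lborel (einterval (-\<infinity>) 0) (Rf r)"
    "(LBINT x=-\<infinity>..0. Rf r x) = Gtop (-r) s - Gf (-r) s 0"
proof -
  have r': "-1 < -r" "-r < 1" "-r \<noteq> 0" using r by auto
  have r2: "r^2 < 1" using r by (simp add: abs_less_iff power2_less_1_iff)
  hence s2: "s^2 = 1 - (-r)^2" and s0: "s > 0" unfolding s_def by auto
  define F where "F x = - Gf (-r) s (-x)" for x
  have D0: "(F has_real_derivative - ((-x)*((-x)^2-(-r)*(-x)+1)/(((-x)^2-2*(-r)*(-x)+1)^2*(1+(-x)^2)) * (-1))) (at x)" for x
      unfolding F_def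
      by (intro DERIV_minus DERIV_chain2[OF Gf_deriv[OF r' s0 s2]]) (auto intro!: derivative_eq_intros)
  have D: "(F has_real_derivative Rf r x) (at x)" if "x < 0" for x
    using D0[of x] that unfolding Rf_def by simp
  have cont0: "isCont F 0" using D0[of 0] by (rule DERIV_isCont)
  have A: "((F \<circ> real_of_ereal) \<longlongrightarrow> - Gtop (-r) s) (at_right (-\<infinity>::ereal))"
    unfolding ereal_tendsto_simps1 filterlim_at_bot_mirror unfolding F_def
    by (intro tendsto_minus) (simp add: Gf_top[OF s0])
  have B: "((F \<circ> real_of_ereal) \<longlongrightarrow> F 0) (at_left (0::ereal))"
    unfolding zero_ereal_def ereal_tendsto_simps1
    using cont0 unfolding isCont_def by (rule tendsto_within_subset) simp
  note X = interval_integral_FTC_nonneg[where F = F and f = "Rf r" and a = "-\<infinity>" and b = 0,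
     OF _ _ _ _ A B]
  have h1: "(-\<infinity>::ereal) < 0" by simp
  have h2: "\<And>x. -\<infinity> < ereal x \<Longrightarrow> ereal x < 0 \<Longrightarrow> (F has_real_derivative Rf r x) (at x)"
    using D by (simp add: zero_ereal_def)
  have h3: "\<And>x. -\<infinity> < ereal x \<Longrightarrow> ereal x < 0 \<Longrightarrow> isCont (Rf r) x"
    using Rf_cont[OF r(1,2)] by blast
  have h4: "AE x in lborel. -\<infinity> < ereal x \<longrightarrow> ereal x < 0 \<longrightarrow> 0 \<le> Rf r x"
    using Rf_nonneg[OF r(1,2)] by simp
  show "set_integrable lborel (einterval (-\<infinity>) 0) (Rf r)" using X(1)[OF h1 h2 h3 h4] .
  have "(LBINT x=-\<infinity>..0. Rf r x) = F 0 - - Gtop (-r) s" using X(2)[OF h1 h2 h3 h4] .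
  thus "(LBINT x=-\<infinity>..0. Rf r x) = Gtop (-r) s - Gf (-r) s 0" unfolding F_def by simp
qed



lemma split_total:
  fixes f :: "real \<Rightarrow> real"
  assumes i1: "set_integrable lborel (einterval (-\<infinity>) 0) f" and i2: "set_integrable lborel (einterval 0 \<infinity>) f"
    and f0: "f 0 = 0"
  shows "integrable lborel f" "(LINT x|lborel. f x) = (LBINT x=-\<infinity>..0. f x) + (LBINT x=0..\<infinity>. f x)"
proof -
  have eq: "f = (\<lambda>x. indicator (einterval (-\<infinity>) 0) x *\<^sub>R f x + indicator (einterval 0 \<infinity>) x *\<^sub>R f x)"
  proof
    fix x show "f x = indicator (einterval (-\<infinity>) 0) x *\<^sub>R f x + indicator (einterval 0 \<infinity>) x *\<^sub>R f x"
      using f0 by (cases "x < 0"; cases "x > 0") (auto simp: einterval_iff indicator_def zero_ereal_def)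
  qed
  have j1: "integrable lborel (\<lambda>x. indicator (einterval (-\<infinity>) 0) x *\<^sub>R f x)" using i1 unfolding set_integrable_def .
  have j2: "integrable lborel (\<lambda>x. indicator (einterval 0 \<infinity>) x *\<^sub>R f x)" using i2 unfolding set_integrable_def .
  show "integrable lborel f" by (subst eq) (rule Bochner_Integration.integrable_add[OF j1 j2])
  have "(LINT x|lborel. f x) = (LINT x|lborel. indicator (einterval (-\<infinity>) 0) x *\<^sub>R f x + indicator (einterval 0 \<infinity>) x *\<^sub>R f x)"
    by (subst eq) simp
  also have "\<dots> = (LINT x|lborel. indicator (einterval (-\<infinity>) 0) x *\<^sub>R f x) + (LINT x|lborel. indicator (einterval 0 \<infinity>) x *\<^sub>R f x)"
    by (rule Bochner_Integration.integral_add[OF j1 j2])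
  also have "\<dots> = (LBINT x=-\<infinity>..0. f x) + (LBINT x=0..\<infinity>. f x)"
    unfolding interval_lebesgue_integral_def set_lebesgue_integral_def by simp
  finally show "(LINT x|lborel. f x) = (LBINT x=-\<infinity>..0. f x) + (LBINT x=0..\<infinity>. f x)" .
qed

definition Yf :: "real \<Rightarrow> real" where
  "Yf r = (if r = 0 then 1 else 1/(2*(sqrt (1-r^2))^2) + arcsin r/(2*r*(sqrt (1-r^2))^3))"

lemma total_nz: fixes r :: real assumes r: "-1 < r" "r < 1" "r \<noteq> 0"
  shows "integrable lborel (Rf r)" "(LINT x|lborel. Rf r x) = Yf r"
proof -
  define s where "s = sqrt (1 - r^2)"
  have r2: "r^2 < 1" using r by (simp add: abs_less_iff power2_less_1_iff)
  hence s2: "s^2 = 1 - r^2" and s0: "s > 0" unfolding s_def by auto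
  have R0: "Rf r 0 = 0" unfolding Rf_def by simp
  have r': "-1 < -r" "-r < 1" "-r \<noteq> 0" using r by auto
  note P = int_pos[OF r] and N = int_neg[OF r]
  show "integrable lborel (Rf r)" using split_total(1)[OF N(1) P(1) R0] .
  have "(LINT x|lborel. Rf r x) = (Gtop (-r) s - Gf (-r) s 0) + (Gtop r s - Gf r s 0)"
    using split_total(2)[OF N(1) P(1) R0] P(2) N(2) unfolding s_def by simp
  also have "\<dots> = Yf r"
  proof -
    have at: "arctan (r/s) = arcsin r" unfolding s_def using r by (simp add: arcsin_arctan)
    have g1: "Gf r s 0 = - arcsin r/(4*r* s) - 1/4 - r^2/(4* s^2) - r*arcsin r/(4* s^3)"
      unfolding Gf_def using at by (simp add: arctan_minus power2_eq_square)
    have g2: "Gf (-r) s 0 = - arcsin r/(4*r* s) - 1/4 - r^2/(4* s^2) - r*arcsin r/(4* s^3)"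
      unfolding Gf_def using at by (simp add: arctan_minus power2_eq_square)
    have gt: "Gtop (-r) s + Gtop r s = 0" unfolding Gtop_def by simp
    have Y: "Yf r = 1/(2* s^2) + arcsin r/(2*r* s^3)" unfolding Yf_def s_def using r by simp
    show ?thesis unfolding Y g1 g2 using gt s0 r s2 apply (simp add: field_simps)
      using s2 by algebra
  qed
  finally show "(LINT x|lborel. Rf r x) = Yf r" .
qed


lemma total_zero: "integrable lborel (Rf 0)" "(LINT x|lborel. Rf 0 x) = Yf 0"
proof -
  have R: "Rf 0 x = \<bar>x\<bar>/(1+x^2)^2" for x
  proof -
    define P where "P = 1 + x^2"
    have P: "P \<noteq> 0" unfolding P_def using zero_le_power2[of x] by linarith
    have "Rf 0 x = \<bar>x\<bar> * P / (P^2 * P)" unfolding Rf_def P_def by (simp add: add.commute)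
    also have "\<dots> = \<bar>x\<bar> / P^2" using P by (simp add: power2_eq_square)
    finally show ?thesis unfolding P_def .
  qed
  have P0: "1 + x^2 \<noteq> 0" for x :: real using zero_le_power2[of x] by linarith
  define Fp where "Fp x = - 1/(2*(1+x^2))" for x :: real
  define Fn where "Fn x = 1/(2*(1+x^2))" for x :: real
  have dFp: "(Fp has_real_derivative x/(1+x^2)^2) (at x)" for x
  proof -
    have "(Fp has_real_derivative - (- 1 * (2*(2*x)) / (2*(1+x^2))^2)) (at x)"
      unfolding Fp_def using P0[of x] by (auto intro!: derivative_eq_intros simp: power2_eq_square)
    moreover have "- (- 1 * (2*(2*x)) / (2*(1+x^2))^2) = x/(1+x^2)^2"
    proof -
      have "(2*(1+x^2))^2 = 4*(1+x^2)^2" by (simp only: power_mult_distrib) simp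
      thus ?thesis by simp
    qed
    ultimately show ?thesis by simp
  qed
  have dFn: "(Fn has_real_derivative - x/(1+x^2)^2) (at x)" for x
  proof -
    have "(Fn has_real_derivative (- (2*(2*x)) / (2*(1+x^2))^2)) (at x)"
      unfolding Fn_def using P0[of x] by (auto intro!: derivative_eq_intros simp: power2_eq_square)
    moreover have "(- (2*(2*x)) / (2*(1+x^2))^2) = - x/(1+x^2)^2"
    proof -
      have "(2*(1+x^2))^2 = 4*(1+x^2)^2" by (simp only: power_mult_distrib) simp
      thus ?thesis by simp
    qed
    ultimately show ?thesis by simp
  qed
  have cp: "isCont Fp 0" using dFp[of 0] by (rule DERIV_isCont)
  have cn: "isCont Fn 0" using dFn[of 0] by (rule DERIV_isCont)
  have Ap: "((Fp \<circ> real_of_ereal) \<longlongrightarrow> Fp 0) (at_right (0::ereal))"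
    unfolding zero_ereal_def ereal_tendsto_simps1
    using cp unfolding isCont_def by (rule tendsto_within_subset) simp
  have Bp: "((Fp \<circ> real_of_ereal) \<longlongrightarrow> 0) (at_left (\<infinity>::ereal))"
    unfolding ereal_tendsto_simps1 Fp_def by real_asymp
  have An: "((Fn \<circ> real_of_ereal) \<longlongrightarrow> 0) (at_right (-\<infinity>::ereal))"
    unfolding ereal_tendsto_simps1 Fn_def by real_asymp
  have Bn: "((Fn \<circ> real_of_ereal) \<longlongrightarrow> Fn 0) (at_left (0::ereal))"
    unfolding zero_ereal_def ereal_tendsto_simps1
    using cn unfolding isCont_def by (rule tendsto_within_subset) simp
  note XP = interval_integral_FTC_nonneg[where F = Fp and f = "Rf 0" and a = 0 and b = \<infinity>, OF _ _ _ _ Ap Bp]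
  note XN = interval_integral_FTC_nonneg[where F = Fn and f = "Rf 0" and a = "-\<infinity>" and b = 0, OF _ _ _ _ An Bn]
  have r0: "-1 < (0::real)" "(0::real) < 1" by simp_all
  have hp1: "(0::ereal) < \<infinity>" by simp
  have hp2: "\<And>x. 0 < ereal x \<Longrightarrow> ereal x < \<infinity> \<Longrightarrow> (Fp has_real_derivative Rf 0 x) (at x)"
    using dFp unfolding R by (simp add: zero_ereal_def)
  have hp3: "\<And>x. 0 < ereal x \<Longrightarrow> ereal x < \<infinity> \<Longrightarrow> isCont (Rf 0) x"
    using Rf_cont[OF r0] by blast
  have hp4: "AE x in lborel. 0 < ereal x \<longrightarrow> ereal x < \<infinity> \<longrightarrow> 0 \<le> Rf 0 x"
    using Rf_nonneg[OF r0] by simp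
  have hn1: "(-\<infinity>::ereal) < 0" by simp
  have hn2: "\<And>x. -\<infinity> < ereal x \<Longrightarrow> ereal x < 0 \<Longrightarrow> (Fn has_real_derivative Rf 0 x) (at x)"
    using dFn unfolding R by (simp add: zero_ereal_def)
  have hn3: "\<And>x. -\<infinity> < ereal x \<Longrightarrow> ereal x < 0 \<Longrightarrow> isCont (Rf 0) x"
    using Rf_cont[OF r0] by blast
  have hn4: "AE x in lborel. -\<infinity> < ereal x \<longrightarrow> ereal x < 0 \<longrightarrow> 0 \<le> Rf 0 x"
    using Rf_nonneg[OF r0] by simp
  have R0: "Rf 0 0 = 0" unfolding Rf_def by simp
  note I1 = XN(1)[OF hn1 hn2 hn3 hn4] and I2 = XP(1)[OF hp1 hp2 hp3 hp4]
  show "integrable lborel (Rf 0)" using split_total(1)[OF I1 I2 R0] .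
  show "(LINT x|lborel. Rf 0 x) = Yf 0"
    using split_total(2)[OF I1 I2 R0] XN(2)[OF hn1 hn2 hn3 hn4] XP(2)[OF hp1 hp2 hp3 hp4]
    unfolding Yf_def Fp_def Fn_def by simp
qed



definition cc :: "nat \<Rightarrow> real" where
  "cc n = pochhammer 2 n * pochhammer 1 n / (pochhammer (3/2) n * fact n)"

lemma cc_0: "cc 0 = 1" unfolding cc_def by simp

lemma cc_alt: "cc n = pochhammer 2 n / pochhammer (3/2) n"
  unfolding cc_def pochhammer_fact[symmetric] by simp

lemma cc_pos: "cc n > 0" unfolding cc_alt by (intro divide_pos_pos pochhammer_pos) auto

lemma cc_Suc: "cc (Suc n) * (2*n+3) = cc n * (2*n+4)"
proof -
  have p: "pochhammer (3/2::real) n > 0" by (rule pochhammer_pos) simp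
  have "cc (Suc n) = cc n * (2 + n) / (3/2 + n)"
    unfolding cc_alt pochhammer_Suc using p by (simp add: field_simps)
  thus ?thesis by (simp add: field_simps)
qed

lemma cc_bound: "cc n \<le> real n + 1"
proof (induction n)
  case 0 thus ?case by (simp add: cc_0)
next
  case (Suc n)
  have "cc (Suc n) = cc n * (2*real n+4) / (2*real n+3)" using cc_Suc[of n] by (simp add: field_simps)
  also have "\<dots> \<le> (real n+1) * (2*real n+4) / (2*real n+3)"
  proof -
    have "cc n * (2*real n+4) \<le> (real n+1) * (2*real n+4)" by (rule mult_right_mono) (use Suc in auto)
    thus ?thesis by (rule divide_right_mono) simp
  qed
  also have "\<dots> \<le> real (Suc n) + 1" by (simp add: field_simps)
  finally show ?case .
qed

definition ee :: "nat \<Rightarrow> real" where "ee m = (if odd m then cc (m div 2) else 0)"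

lemma summable_Suc_pow: fixes q :: real assumes "\<bar>q\<bar> < 1" shows "summable (\<lambda>n. real (Suc n) * q^n)"
proof -
  have "summable (\<lambda>n. diffs (\<lambda>n. 1::real) n * q^n)"
    by (rule termdiff_converges[where K = 1]) (use assms in \<open>auto intro!: summable_geometric\<close>)
  thus ?thesis unfolding diffs_def by simp
qed

lemma ee_summable: fixes x :: real assumes "\<bar>x\<bar> < 1" shows "summable (\<lambda>m. ee m * x^m)"
proof (rule summable_comparison_test)
  show "summable (\<lambda>m. real (Suc m) * \<bar>x\<bar>^m)" using summable_Suc_pow[of "\<bar>x\<bar>"] assms by simp
  show "\<exists>N. \<forall>m\<ge>N. norm (ee m * x^m) \<le> real (Suc m) * \<bar>x\<bar>^m"
  proof (intro exI allI impI)
    fix m :: nat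
    have "\<bar>ee m\<bar> \<le> real (Suc m)"
      using cc_bound[of "m div 2"] cc_pos[of "m div 2"] unfolding ee_def
      by (auto simp: of_nat_div)
    thus "norm (ee m * x^m) \<le> real (Suc m) * \<bar>x\<bar>^m"
      by (simp add: abs_mult power_abs mult_right_mono)
  qed
qed


definition U :: "real \<Rightarrow> real" where "U x = (\<Sum>m. ee m * x^m)"
definition U' :: "real \<Rightarrow> real" where "U' x = (\<Sum>m. diffs ee m * x^m)"

lemma U_sums: fixes x :: real assumes "\<bar>x\<bar> < 1" shows "(\<lambda>n. cc n * x^(2*n+1)) sums U x"
proof -
  have "(\<lambda>m. ee m * x^m) sums U x" unfolding U_def using ee_summable[OF assms] by (rule summable_sums)
  moreover have "strict_mono (\<lambda>n::nat. 2*n+1)" by (rule strict_monoI) simp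
  moreover have "ee m * x^m = 0" if "m \<notin> range (\<lambda>n::nat. 2*n+1)" for m
  proof -
    have "\<not> odd m" using that by (metis oddE rangeI)
    thus ?thesis unfolding ee_def by simp
  qed
  ultimately have "(\<lambda>n. ee (2*n+1) * x^(2*n+1)) sums U x"
    using sums_mono_reindex[of "\<lambda>n::nat. 2*n+1" "\<lambda>m. ee m * x^m"] by blast
  moreover have "ee (2*n+1) = cc n" for n unfolding ee_def by simp
  ultimately show ?thesis by simp
qed

lemma U_deriv: fixes x :: real assumes "\<bar>x\<bar> < 1" shows "(U has_real_derivative U' x) (at x)"
  unfolding U_def U'_def
  by (rule termdiffs_strong'[where K = 1]) (use assms ee_summable in auto)

lemma U'_sums: fixes x :: real assumes "\<bar>x\<bar> < 1" shows "(\<lambda>n. (2*real n+1) * cc n * x^(2*n)) sums U' x"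
proof -
  have "summable (\<lambda>m. diffs ee m * x^m)"
    by (rule termdiff_converges[where K = 1]) (use assms ee_summable in auto)
  hence "(\<lambda>m. diffs ee m * x^m) sums U' x" unfolding U'_def by (rule summable_sums)
  moreover have "strict_mono (\<lambda>n::nat. 2*n)" by (rule strict_monoI) simp
  moreover have "diffs ee m * x^m = 0" if "m \<notin> range (\<lambda>n::nat. 2*n)" for m
  proof -
    have "odd m" using that by (metis evenE rangeI)
    thus ?thesis unfolding ee_def diffs_def by simp
  qed
  ultimately have "(\<lambda>n. diffs ee (2*n) * x^(2*n)) sums U' x"
    using sums_mono_reindex[of "\<lambda>n::nat. 2*n" "\<lambda>m. diffs ee m * x^m"] by blast
  moreover have "diffs ee (2*n) = (2*real n+1) * cc n" for n unfolding ee_def diffs_def by simp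
  ultimately show ?thesis by simp
qed

lemma U_ode: fixes x :: real assumes x: "\<bar>x\<bar> < 1" shows "U' x = 1 + x^2 * U' x + 3 * x * U x"
proof -
  define S where "S n = (2*real n+1) * cc n * x^(2*n)" for n
  have "S sums U' x" unfolding S_def using U'_sums[OF x] .
  hence a: "(\<lambda>n. S (Suc n)) sums (U' x - 1)"
    using sums_Suc_iff[of S "U' x - 1"] by (simp add: S_def cc_0)
  have b: "(\<lambda>n. x^2 * ((2*real n+1) * cc n * x^(2*n)) + 3*x * (cc n * x^(2*n+1))) sums (x^2 * U' x + 3*x*U x)"
    by (intro sums_add sums_mult U'_sums U_sums x)
  have "S (Suc n) = x^2 * ((2*real n+1) * cc n * x^(2*n)) + 3*x * (cc n * x^(2*n+1))" for n
  proof -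
    have "S (Suc n) = (cc (Suc n) * (2*n+3)) * x^(2*n+2)" unfolding S_def by (simp add: algebra_simps)
    also have "\<dots> = cc n * (2*n+4) * x^(2*n+2)" by (simp only: cc_Suc)
    also have "\<dots> = x^2 * ((2*real n+1) * cc n * x^(2*n)) + 3*x * (cc n * x^(2*n+1))"
      by (simp add: algebra_simps power_add power2_eq_square)
    finally show ?thesis .
  qed
  hence "(\<lambda>n. S (Suc n)) sums (x^2 * U' x + 3*x*U x)" using b by simp
  with a have "U' x - 1 = x^2 * U' x + 3*x*U x" by (rule sums_unique2)
  thus ?thesis by simp
qed


lemma U_zero: "U 0 = 0" unfolding U_def using powser_zero[of ee] by (simp add: ee_def)

lemma U_closed: fixes x :: real assumes x: "-1 < x" "x < 1"
  shows "U x * (sqrt (1 - x^2))^3 = (x * sqrt (1 - x^2) + arcsin x)/2"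
proof -
  define Df where "Df y = U y * (sqrt (1 - y^2))^3 - (y * sqrt (1 - y^2) + arcsin y)/2" for y
  have "Df x = Df 0"
  proof (rule DERIV_isconst3[of "-1" 1 x 0 Df])
    show "-1 < (1::real)" by simp
    show "x \<in> {-1<..<1}" using x by simp
    show "(0::real) \<in> {-1<..<1}" by simp
    fix y :: real assume y: "y \<in> {-1<..<1}"
    hence y1: "-1 < y" "y < 1" "\<bar>y\<bar> < 1" by auto
    have y2: "y^2 < 1" using y1 by (simp add: abs_less_iff power2_less_1_iff)
    define s where "s = sqrt (1 - y^2)"
    have s0: "s > 0" and s2: "s^2 = 1 - y^2" unfolding s_def using y2 by auto
    have ode: "U' y = 1 + y^2 * U' y + 3 * y * U y" by (rule U_ode) (use y1 in simp)
    have p: "0 < 1 - y^2" using y2 by simp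
    show "(Df has_real_derivative 0) (at y)"
      unfolding Df_def
      apply (rule DERIV_cong)
       apply (rule derivative_eq_intros refl U_deriv DERIV_arcsin | (use y1 p in simp; fail))+
      unfolding s_def[symmetric] using s0 apply (simp add: field_simps)
      using s2 ode by algebra
  qed
  also have "Df 0 = 0" unfolding Df_def by (simp add: U_zero)
  finally show ?thesis unfolding Df_def by simp
qed


lemma hyp_series: "hyp2F1 2 1 (3/2) z = (\<Sum>n. cc n * z^n)"
  unfolding hyp2F1_def cc_def ..

lemma hyp_closed: fixes r :: real assumes r: "-1 < r" "r < 1"
  shows "hyp2F1 2 1 (3/2) (r^2) =
    (if r = 0 then 1 else 1/(2*(sqrt (1-r^2))^2) + arcsin r/(2*r*(sqrt (1-r^2))^3))"
proof (cases "r = 0")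
  case True thus ?thesis unfolding hyp_series using powser_zero[of cc] by (simp add: cc_0)
next
  case False
  define s where "s = sqrt (1 - r^2)"
  have r2: "r^2 < 1" using r by (simp add: abs_less_iff power2_less_1_iff)
  hence s0: "s > 0" and s2: "s^2 = 1 - r^2" unfolding s_def by auto
  have "(\<lambda>n. cc n * r^(2*n+1) / r) sums (U r / r)"
    by (intro sums_divide U_sums) (use r in simp)
  moreover have "cc n * r^(2*n+1) / r = cc n * (r^2)^n" for n
    using False by (simp add: power_mult)
  ultimately have "(\<lambda>n. cc n * (r^2)^n) sums (U r / r)" by simp
  hence h: "hyp2F1 2 1 (3/2) (r^2) = U r / r" unfolding hyp_series by (rule sums_unique[symmetric])
  have "U r * s^3 = (r * s + arcsin r)/2" unfolding s_def by (rule U_closed[OF r])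
  hence "U r = (r * s + arcsin r)/(2 * s^3)" using s0 by (simp add: field_simps)
  hence "hyp2F1 2 1 (3/2) (r^2) = 1/(2* s^2) + arcsin r/(2*r* s^3)"
    unfolding h using False s0 by (simp add: field_simps power2_eq_square power3_eq_cube)
  thus ?thesis using False unfolding s_def by simp
qed


theorem mainTheorem9:
  fixes r \<beta> :: real
  assumes "-1 < r" and "r < 1" and "\<beta> \<noteq> 0"
  shows "cauchy_density \<beta> * J_fun \<beta> 5 r 1 / (LINT x|lborel. cauchy_density x * J_fun x 5 r 1)
     = (1 / hyp2F1 2 1 (3/2) (r\<^sup>2)) * (1 / (1 + \<beta>\<^sup>2)) *
       (\<bar>\<beta>\<bar> * (\<beta>\<^sup>2 - r * \<beta> + 1) / (\<beta>\<^sup>2 - 2 * r * \<beta> + 1)\<^sup>2)"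
proof -
  have r: "-1 < r" "r < 1" using assms by auto
  define C where "C = c5 * sqrt 5 * (sqrt (1-r^2))^5"
  have r2: "r^2 < 1" using r by (simp add: abs_less_iff power2_less_1_iff)
  have C0: "C > 0" unfolding C_def using c5_pos r2 by simp
  have cj: "cauchy_density x * J_fun x 5 r 1 = (C/pi) * Rf r x" for x
  proof -
    have Q: "(x^2-2*r*x+1) \<noteq> 0" using Q_pos[OF r, of x] by simp
    have P: "1 + x^2 \<noteq> 0" using zero_le_power2[of x] by linarith
    show ?thesis unfolding cauchy_density_def J5[OF r] C_def[symmetric] gfun_def Rf_def
      using Q P by (simp add: field_simps)
  qed
  have tot: "(LINT x|lborel. Rf r x) = Yf r"
    using total_nz[OF r] total_zero by (cases "r = 0") auto
  have den: "(LINT x|lborel. cauchy_density x * J_fun x 5 r 1) = C/pi * Yf r"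
    unfolding cj integral_mult_right_zero tot ..
  have hyp: "hyp2F1 2 1 (3/2) (r\<^sup>2) = Yf r" unfolding hyp_closed[OF r] Yf_def ..
  show ?thesis
  proof (cases "Yf r = 0")
    case True thus ?thesis unfolding den hyp by simp
  next
    case False
    have P: "1 + \<beta>^2 \<noteq> 0" using zero_le_power2[of \<beta>] by linarith
    have Q: "(\<beta>^2-2*r*\<beta>+1) \<noteq> 0" using Q_pos[OF r, of \<beta>] by simp
    have e: "C/pi * X / (C/pi * Y) = X / Y" for X Y using C0 pi_gt_zero by simp
    show ?thesis unfolding den hyp unfolding cj e unfolding Rf_def
      by (simp add: ac_simps)
  qed
qed

end
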